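(* Let $k>0$ and let $A$ be the operator on $L^2(0,1)$ defined by $Af=-if''$ with domain $D(A)=\{f\in H^2(0,1): f(0)=0,\ f'(1)=-ikf(1)\}$. Then $i\mathbb{R}\subset\rho(A)$, i.e. every purely imaginary number belongs to the resolvent set of $A$.
   Context: $L^2(0,1)$ carries its standard inner product $\langle f,g\rangle=\int_0^1 f\bar g\,dx$. $\rho(A)$ denotes the resolvent set of $A$. This operator is the generator of the closed-loop Schrödinger system $w_t=-iw_{xx}$, $w(0,t)=0$, $w_x(1,t)=-ikw(1,t)$. *)

theory Defs
  imports "HOL-Analysis.Analysis"
begin

text \<open>Complex-valued functions on the interval (0,1). Elements of L2(0,1) are represented
  by functions real => complex; equality in L2 is equality almost everywhere on [0,1].\<close>

definition L2_01 :: "(real \<Rightarrow> complex) \<Rightarrow> bool" where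
  "L2_01 f \<longleftrightarrow> f measurable_on {0..1} \<and> (\<lambda>x. (cmod (f x))\<^sup>2) integrable_on {0..1}"

definition L2_norm :: "(real \<Rightarrow> complex) \<Rightarrow> real" where
  "L2_norm f = sqrt (integral {0..1} (\<lambda>x. (cmod (f x))\<^sup>2))"

definition ae01 :: "(real \<Rightarrow> bool) \<Rightarrow> bool" where
  "ae01 P \<longleftrightarrow> negligible {x \<in> {0..1}. \<not> P x}"

text \<open>Sobolev space H2(0,1): f (its continuous representative) with weak derivatives
  f1 = f' (absolutely continuous) and f2 = f'' in L2(0,1).\<close>
definition H2_with_derivs ::
  "(real \<Rightarrow> complex) \<Rightarrow> (real \<Rightarrow> complex) \<Rightarrow> (real \<Rightarrow> complex) \<Rightarrow> bool" where
  "H2_with_derivs f f1 f2 \<longleftrightarrow>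
     L2_01 f2 \<and> f2 integrable_on {0..1} \<and> f1 integrable_on {0..1} \<and>
     (\<forall>x\<in>{0..1}. f1 x = f1 0 + integral {0..x} f2) \<and>
     (\<forall>x\<in>{0..1}. f x = f 0 + integral {0..x} f1)"

text \<open>Graph of the operator A f = -i f'' with domain
  D(A) = {f in H2(0,1) : f(0) = 0, f'(1) = -i k f(1)}:
  A_graph k f u means f is in D(A) and A f = u (in L2, i.e. a.e.).\<close>
definition A_graph :: "real \<Rightarrow> (real \<Rightarrow> complex) \<Rightarrow> (real \<Rightarrow> complex) \<Rightarrow> bool" where
  "A_graph k f u \<longleftrightarrow>
     (\<exists>f1 f2. H2_with_derivs f f1 f2 \<and> f 0 = 0 \<and> f1 1 = - \<i> * complex_of_real k * f 1 \<and>
              L2_01 u \<and> ae01 (\<lambda>x. u x = - \<i> * f2 x))"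

text \<open>Resolvent set of A: lambda such that lambda I - A : D(A) -> L2 is bijective
  with bounded inverse.  Surjectivity: every g in L2 is attained; injectivity and
  boundedness of the inverse: every preimage f of g satisfies ||f|| <= C ||g||.\<close>
definition resolvent_set_A :: "real \<Rightarrow> complex set" where
  "resolvent_set_A k = {z. \<exists>C. \<forall>g. L2_01 g \<longrightarrow>
      (\<exists>f u. A_graph k f u \<and> ae01 (\<lambda>x. z * f x - u x = g x)) \<and>
      (\<forall>f u. A_graph k f u \<and> ae01 (\<lambda>x. z * f x - u x = g x) \<longrightarrow> L2_norm f \<le> C * L2_norm g)}"

end

theory Submission
  imports Defs
begin

lemma l2_facts:
  assumes "L2_01 g"
  shows "g absolutely_integrable_on {0..1}"
    "(\<lambda>x. norm (g x)) integrable_on {0..1}"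
    "integral {0..1} (\<lambda>x. norm (g x)) \<le> L2_norm g"
    "g \<in> borel_measurable (lebesgue_on {0..1})"
proof -
  have S: "{0..1::real} \<in> sets lebesgue" by simp
  show gm: "g \<in> borel_measurable (lebesgue_on {0..1})"
    using assms unfolding L2_01_def by (simp add: measurable_on_iff_borel_measurable[OF S])
  have sq: "(\<lambda>x. (cmod (g x))\<^sup>2) integrable_on {0..1}" using assms unfolding L2_01_def by simp
  have b: "norm (g x) \<le> 1 + (cmod (g x))\<^sup>2" for x
  proof -
    have "0 \<le> (cmod (g x) - 1/2)\<^sup>2" by simp
    then show ?thesis by (simp add: power2_eq_square algebra_simps)
  qed
  show abs: "g absolutely_integrable_on {0..1}"
    by (rule measurable_bounded_by_integrable_imp_absolutely_integrable[OF gm S])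
       (rule integrable_add[OF integrable_const_ivl sq], rule b)
  then show nint: "(\<lambda>x. norm (g x)) integrable_on {0..1}"
    using absolutely_integrable_on_def by blast
  define I where "I = integral {0..1} (\<lambda>x. (cmod (g x))\<^sup>2)"
  have I0: "0 \<le> I" unfolding I_def by (rule integral_nonneg[OF sq]) auto
  have key: "integral {0..1} (\<lambda>x. norm (g x)) \<le> t/2 + (1/(2 * t)) * I" if t: "t > 0" for t
  proof -
    have pw: "norm (g x) \<le> t/2 + (1/(2 * t)) * (cmod (g x))\<^sup>2" for x
    proof -
      have "0 \<le> (cmod (g x) - t)\<^sup>2" by simp
      then have "2 * t * cmod (g x) \<le> t\<^sup>2 + (cmod (g x))\<^sup>2" by (simp add: power2_eq_square algebra_simps)
      then show ?thesis using t by (simp add: field_simps power2_eq_square)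
    qed
    have hi: "((\<lambda>x. t/2 + (1/(2 * t)) * (cmod (g x))\<^sup>2) has_integral (t/2 + (1/(2 * t)) * I)) {0..1}"
    proof -
      have "((\<lambda>x. t/2) has_integral (t/2)) {0..1::real}"
        using has_integral_const_real[of "t/2" 0 "1::real"] by simp
      moreover have "((\<lambda>x. (1/(2 * t)) * (cmod (g x))\<^sup>2) has_integral ((1/(2 * t)) * I)) {0..1}"
        unfolding I_def by (intro has_integral_mult_right integrable_integral sq)
      ultimately show ?thesis by (rule has_integral_add)
    qed
    show ?thesis
      using integral_le[OF nint hi[THEN has_integral_integrable] pw] hi[THEN integral_unique] by simp
  qed
  show "integral {0..1} (\<lambda>x. norm (g x)) \<le> L2_norm g"
  proof (cases "I > 0")
    case True
    have "integral {0..1} (\<lambda>x. norm (g x)) \<le> sqrt I/2 + (1/(2 * sqrt I)) * I"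
      using key[of "sqrt I"] True by simp
    also have "\<dots> = sqrt I" using True
      by (simp add: field_simps)
    finally show ?thesis unfolding L2_norm_def I_def .
  next
    case False
    then have "I = 0" using I0 by simp
    have "integral {0..1} (\<lambda>x. norm (g x)) \<le> 0"
    proof (rule ccontr)
      assume "\<not> ?thesis"
      then have p: "integral {0..1} (\<lambda>x. norm (g x)) > 0" by simp
      from key[OF p] \<open>I = 0\<close> p show False by simp
    qed
    then show ?thesis unfolding L2_norm_def using \<open>I = 0\<close> I_def by simp
  qed
qed

lemma int_bound01:
  fixes F :: "real \<Rightarrow> complex"
  assumes "0 \<le> x" "x \<le> 1" "F integrable_on {0..x}" "\<And>t. t \<in> {0..x} \<Longrightarrow> norm (F t) \<le> B" "0 \<le> B"
  shows "norm (integral {0..x} F) \<le> B"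
proof -
  have "norm (integral {0..x} F) \<le> B * Henstock_Kurzweil_Integration.content (cbox 0 x)"
    by (rule has_integral_bound[OF assms(5)]) (use assms in \<open>auto simp: cbox_interval\<close>)
  also have "\<dots> \<le> B" using assms by (simp add: mult_left_le)
  finally show ?thesis .
qed

lemma L2_norm_bound:
  fixes f :: "real \<Rightarrow> complex"
  assumes "continuous_on {0..1} f" "\<And>x. x \<in> {0..1} \<Longrightarrow> norm (f x) \<le> B" "0 \<le> B"
  shows "L2_norm f \<le> B"
proof -
  have c: "continuous_on {0..1} (\<lambda>x. (cmod (f x))\<^sup>2)"
    by (intro continuous_intros assms)
  have "integral {0..1} (\<lambda>x. (cmod (f x))\<^sup>2) \<le> integral {0..1} (\<lambda>x::real. B\<^sup>2)"
    by (rule integral_le[OF integrable_continuous_real[OF c] integrable_const_ivl])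
       (rule power_mono[OF assms(2)], auto)
  also have "\<dots> = B\<^sup>2" by simp
  finally have "sqrt (integral {0..1} (\<lambda>x. (cmod (f x))\<^sup>2)) \<le> sqrt (B\<^sup>2)"
    by (rule real_sqrt_le_mono)
  then show ?thesis unfolding L2_norm_def using assms(3) by simp
qed


lemma sq_tri: "(norm (a + b :: 'a::real_normed_vector))\<^sup>2 \<le> 2 * (norm a)\<^sup>2 + 2 * (norm b)\<^sup>2"
proof -
  have "norm (a + b) \<le> norm a + norm b" by (rule norm_triangle_ineq)
  then have "(norm (a + b))\<^sup>2 \<le> (norm a + norm b)\<^sup>2" by (rule power_mono) simp
  moreover have "0 \<le> (norm a - norm b)\<^sup>2" by simp
  ultimately show ?thesis by (simp add: power2_eq_square algebra_simps)
qed

lemma L2_01_comb: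
  fixes F g :: "real \<Rightarrow> complex"
  assumes g: "L2_01 g" and F: "continuous_on {0..1} F" and B: "\<And>x. x \<in> {0..1} \<Longrightarrow> norm (F x) \<le> B"
  shows "L2_01 (\<lambda>x. a * g x + F x)"
proof -
  have S: "{0..1::real} \<in> sets lebesgue" by simp
  have gm: "g \<in> borel_measurable (lebesgue_on {0..1})" using l2_facts[OF g] by blast
  have Fm: "F \<in> borel_measurable (lebesgue_on {0..1})"
    by (rule continuous_imp_measurable_on_sets_lebesgue[OF F S])
  have m: "(\<lambda>x. a * g x + F x) \<in> borel_measurable (lebesgue_on {0..1})"
    using gm Fm by measurable
  have m2: "(\<lambda>x. (cmod (a * g x + F x))\<^sup>2) \<in> borel_measurable (lebesgue_on {0..1})"
    using m by measurable
  have sq: "(\<lambda>x. (cmod (g x))\<^sup>2) integrable_on {0..1}" using g unfolding L2_01_def by simp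
  have bi: "(\<lambda>x. 2 * (cmod a)\<^sup>2 * (cmod (g x))\<^sup>2 + 2 * B\<^sup>2) integrable_on {0..1}"
    by (intro integrable_add integrable_on_mult_right sq integrable_const_ivl)
  have pw: "norm ((cmod (a * g x + F x))\<^sup>2) \<le> 2 * (cmod a)\<^sup>2 * (cmod (g x))\<^sup>2 + 2 * B\<^sup>2"
    if x: "x \<in> {0..1}" for x
  proof -
    have "(cmod (F x))\<^sup>2 \<le> B\<^sup>2" by (rule power_mono[OF B[OF x]]) simp
    moreover have "(cmod (a * g x + F x))\<^sup>2 \<le> 2 * (cmod (a * g x))\<^sup>2 + 2 * (cmod (F x))\<^sup>2"
      by (rule sq_tri)
    ultimately show ?thesis by (simp add: norm_mult power_mult_distrib)
  qed
  show ?thesis unfolding L2_01_def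
  proof
    show "(\<lambda>x. a * g x + F x) measurable_on {0..1}"
      using m by (simp add: measurable_on_iff_borel_measurable[OF S])
    show "(\<lambda>x. (cmod (a * g x + F x))\<^sup>2) integrable_on {0..1}"
      by (rule measurable_bounded_by_integrable_imp_integrable[OF m2 bi pw S])
  qed
qed

lemma n4: "norm (a + (b - c + d)) \<le> norm a + norm b + norm c + norm (d::'a::real_normed_vector)"
proof -
  have "norm (b - c + d) \<le> norm (b - c) + norm d" by (rule norm_triangle_ineq)
  moreover have "norm (b - c) \<le> norm b + norm c" by (rule norm_triangle_ineq4)
  moreover have "norm (a + (b - c + d)) \<le> norm a + norm (b - c + d)" by (rule norm_triangle_ineq)
  ultimately show ?thesis by linarith
qed

lemma n3: "norm (a + b - c) \<le> norm a + norm b + norm (c::'a::real_normed_vector)"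
proof -
  have "norm (a + b - c) \<le> norm (a + b) + norm c" by (rule norm_triangle_ineq4)
  moreover have "norm (a + b) \<le> norm a + norm b" by (rule norm_triangle_ineq)
  ultimately show ?thesis by linarith
qed

lemma cont_bound01:
  fixes f :: "real \<Rightarrow> complex"
  assumes "continuous_on {0..1} f"
  shows "\<exists>B. \<forall>x\<in>{0..1}. norm (f x) \<le> B"
proof -
  have "compact (f ` {0..1})" by (rule compact_continuous_image[OF assms]) simp
  then have "bounded (f ` {0..1})" by (rule compact_imp_bounded)
  then show ?thesis unfolding bounded_iff by auto
qed


locale fund =
  fixes w k :: real and p p1 q q1 :: "real \<Rightarrow> complex"
  assumes kpos: "k > 0"
  and dp: "\<And>x. (p has_vector_derivative p1 x) (at x)"
  and dp1: "\<And>x. (p1 has_vector_derivative (- of_real w * p x)) (at x)"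
  and dq: "\<And>x. (q has_vector_derivative q1 x) (at x)"
  and dq1: "\<And>x. (q1 has_vector_derivative (- of_real w * q x)) (at x)"
  and init: "p 0 = 0" "p1 0 = 1" "q 0 = 1" "q1 0 = 0"
  and realp: "Im (p 1) = 0" "Im (p1 1) = 0"
begin

lemma wr: "q x * p1 x - p x * q1 x = 1"
proof -
  have "((\<lambda>x. q x * p1 x - p x * q1 x) has_vector_derivative 0) (at x within UNIV)" for x
  proof -
    have "((\<lambda>x. q x * p1 x - p x * q1 x) has_vector_derivative
       (q x * (- of_real w * p x) + q1 x * p1 x - (p x * (- of_real w * q x) + p1 x * q1 x))) (at x)"
      by (intro has_vector_derivative_diff has_vector_derivative_mult dq dp1 dp dq1)
    moreover have "q x * (- of_real w * p x) + q1 x * p1 x - (p x * (- of_real w * q x) + p1 x * q1 x) = 0"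
      by (simp add: algebra_simps)
    ultimately show ?thesis by simp
  qed
  then obtain c where c: "\<And>x. x \<in> UNIV \<Longrightarrow> q x * p1 x - p x * q1 x = c"
    by (rule has_vector_derivative_zero_constant[OF convex_UNIV]) auto
  have "c = 1" using c[of 0] init by simp
  then show ?thesis using c by simp
qed

lemma Dnz: "p1 1 + \<i> * of_real k * p 1 \<noteq> 0"
proof
  assume e: "p1 1 + \<i> * of_real k * p 1 = 0"
  have "Re (p1 1 + \<i> * of_real k * p 1) = 0" "Im (p1 1 + \<i> * of_real k * p 1) = 0"
    using e by simp_all
  then have "Re (p1 1) = 0" "k * Re (p 1) = 0" using realp by simp_all
  then have "Re (p1 1) = 0" "Re (p 1) = 0" using kpos by simp_all
  then have "p1 1 = 0" "p 1 = 0" using realp by (simp_all add: complex_eq_iff)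
  then show False using wr[of 1] by simp
qed

lemma dw: "(p has_vector_derivative p1 x) (at x within S)"
  "(p1 has_vector_derivative (- of_real w * p x)) (at x within S)"
  "(q has_vector_derivative q1 x) (at x within S)"
  "(q1 has_vector_derivative (- of_real w * q x)) (at x within S)"
  by (rule has_vector_derivative_at_within, rule dp dp1 dq dq1)+

lemma cont: "continuous_on S p" "continuous_on S p1" "continuous_on S q" "continuous_on S q1"
  by (rule continuous_on_vector_derivative, rule has_vector_derivative_at_within,
      rule dp dp1 dq dq1)+

end


context fund begin

lemma solve:
  assumes g: "L2_01 g"
  and M: "\<And>x. x \<in> {0..1} \<Longrightarrow> norm (p x) \<le> M \<and> norm (p1 x) \<le> M \<and> norm (q x) \<le> M \<and> norm (q1 x) \<le> M"
  shows "\<exists>fc f1c. continuous_on {0..1} fc \<and>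
     H2_with_derivs fc f1c (\<lambda>x. - \<i> * g x - of_real w * fc x) \<and> fc 0 = 0 \<and>
     f1c 1 = - \<i> * of_real k * fc 1 \<and>
     (\<forall>x\<in>{0..1}. norm (fc x) \<le> (1 + 2 * M\<^sup>2 * \<bar>w\<bar>) * (1 + M * (1 + k) / norm (p1 1 + \<i> * of_real k * p 1)) * L2_norm g)"
proof -
  have "norm (p 0) \<le> M" using M[of 0] by simp
  then have M0: "0 \<le> M" by (rule order_trans[OF norm_ge_zero])
  define N where "N = L2_norm g"
  note gf = l2_facts[OF g]
  have gint: "g integrable_on {0..1}" using gf(1) absolutely_integrable_on_def by blast
  have gL1: "integral {0..1} (\<lambda>x. norm (g x)) \<le> N" using gf(3) N_def by simp
  have N0: "0 \<le> N"
    using gL1 integral_nonneg[OF gf(2)] by (meson norm_ge_zero order_trans)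
  define h where "h x = - \<i> * g x" for x
  have hint: "h integrable_on {0..1}" unfolding h_def by (rule integrable_on_mult_right[OF gint])
  have hint': "h integrable_on {0..x}" if "x \<in> {0..1}" for x
    by (rule integrable_on_subinterval[OF hint]) (use that in auto)
  have nh: "norm (h x) = norm (g x)" for x by (simp add: h_def norm_mult)
  define H1 where "H1 x = integral {0..x} h" for x
  have H1b: "norm (H1 x) \<le> N" if x: "x \<in> {0..1}" for x
  proof -
    have "norm (H1 x) \<le> integral {0..x} (\<lambda>t. norm (g t))"
      unfolding H1_def
      by (rule integral_norm_bound_integral[OF hint'[OF x] integrable_on_subinterval[OF gf(2)]])
         (use x nh in auto)
    also have "\<dots> \<le> integral {0..1} (\<lambda>t. norm (g t))"
      by (rule integral_subset_le[OF _ integrable_on_subinterval[OF gf(2)] gf(2)]) (use x in auto)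
    finally show ?thesis using gL1 by linarith
  qed
  have H1c: "continuous_on {0..1} H1" unfolding H1_def by (rule indefinite_integral_continuous_1[OF hint])
  define H2 where "H2 x = integral {0..x} H1" for x
  have dH2: "(H2 has_vector_derivative H1 x) (at x within {0..1})" if "x \<in> {0..1}" for x
    unfolding H2_def by (rule integral_has_vector_derivative[OF H1c that])
  have H2c: "continuous_on {0..1} H2" by (rule continuous_on_vector_derivative[OF dH2])
  have H1int: "(H1 has_integral H2 x) {0..x}" if x: "x \<in> {0..1}" for x
    unfolding H2_def
    by (rule integrable_integral, rule integrable_continuous_real, rule continuous_on_subset[OF H1c])
       (use x in auto)
  have H2b: "norm (H2 x) \<le> N" if x: "x \<in> {0..1}" for x
    unfolding H2_def
    by (rule int_bound01) (use x H1int[OF x] H1b N0 in auto)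
  define r where "r x = - of_real w * H2 x" for x
  have rc: "continuous_on {0..1} r" unfolding r_def by (intro continuous_intros H2c)
  have rb: "norm (r x) \<le> \<bar>w\<bar> * N" if x: "x \<in> {0..1}" for x
    unfolding r_def norm_mult using H2b[OF x] by (simp add: mult_left_mono)
  define A where "A x = integral {0..x} (\<lambda>t. q t * r t)" for x
  define B where "B x = integral {0..x} (\<lambda>t. p t * r t)" for x
  have qrc: "continuous_on {0..1} (\<lambda>t. q t * r t)" by (intro continuous_intros cont rc)
  have prc: "continuous_on {0..1} (\<lambda>t. p t * r t)" by (intro continuous_intros cont rc)
  have dA: "(A has_vector_derivative (q x * r x)) (at x within {0..1})" if "x \<in> {0..1}" for x
    unfolding A_def by (rule integral_has_vector_derivative[OF qrc that])
  have dB: "(B has_vector_derivative (p x * r x)) (at x within {0..1})" if "x \<in> {0..1}" for x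
    unfolding B_def by (rule integral_has_vector_derivative[OF prc that])
  have Ab: "norm (A x) \<le> M * (\<bar>w\<bar> * N)" if x: "x \<in> {0..1}" for x
    unfolding A_def
  proof (rule int_bound01)
    show "(\<lambda>t. q t * r t) integrable_on {0..x}"
      by (rule integrable_continuous_real, rule continuous_on_subset[OF qrc]) (use x in auto)
    show "norm (q t * r t) \<le> M * (\<bar>w\<bar> * N)" if t: "t \<in> {0..x}" for t
    proof -
      have t1: "t \<in> {0..1}" using t x by auto
      show ?thesis unfolding norm_mult
        by (rule mult_mono) (use M[OF t1] rb[OF t1] M0 in auto)
    qed
  qed (use x M0 N0 in auto)
  have Bb: "norm (B x) \<le> M * (\<bar>w\<bar> * N)" if x: "x \<in> {0..1}" for x
    unfolding B_def
  proof (rule int_bound01)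
    show "(\<lambda>t. p t * r t) integrable_on {0..x}"
      by (rule integrable_continuous_real, rule continuous_on_subset[OF prc]) (use x in auto)
    show "norm (p t * r t) \<le> M * (\<bar>w\<bar> * N)" if t: "t \<in> {0..x}" for t
    proof -
      have t1: "t \<in> {0..1}" using t x by auto
      show ?thesis unfolding norm_mult
        by (rule mult_mono) (use M[OF t1] rb[OF t1] M0 in auto)
    qed
  qed (use x M0 N0 in auto)
  define D where "D = p1 1 + \<i> * of_real k * p 1"
  have Dnz': "D \<noteq> 0" unfolding D_def by (rule Dnz)
  define c0 where "c0 = H1 1 + p1 1 * A 1 - q1 1 * B 1 + \<i> * of_real k * (H2 1 + p 1 * A 1 - q 1 * B 1)"
  define \<alpha> where "\<alpha> = - c0 / D"
  define v where "v x = p x * A x - q x * B x + \<alpha> * p x" for x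
  define v1 where "v1 x = p1 x * A x - q1 x * B x + \<alpha> * p1 x" for x
  have dv: "(v has_vector_derivative v1 x) (at x within {0..1})" if x: "x \<in> {0..1}" for x
  proof -
    have "(v has_vector_derivative
       (p x * (q x * r x) + p1 x * A x - (q x * (p x * r x) + q1 x * B x) + \<alpha> * p1 x)) (at x within {0..1})"
      unfolding v_def
      by (intro has_vector_derivative_add has_vector_derivative_diff has_vector_derivative_mult
          has_vector_derivative_mult_right dw dA[OF x] dB[OF x])
    moreover have "p x * (q x * r x) + p1 x * A x - (q x * (p x * r x) + q1 x * B x) + \<alpha> * p1 x = v1 x"
      unfolding v1_def by (simp add: algebra_simps)
    ultimately show ?thesis by simp
  qed
  have dv1: "(v1 has_vector_derivative (- of_real w * v x + r x)) (at x within {0..1})" if x: "x \<in> {0..1}" for x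
  proof -
    have "(v1 has_vector_derivative
       (p1 x * (q x * r x) + (- of_real w * p x) * A x - (q1 x * (p x * r x) + (- of_real w * q x) * B x)
         + \<alpha> * (- of_real w * p x))) (at x within {0..1})"
      unfolding v1_def
      by (intro has_vector_derivative_add has_vector_derivative_diff has_vector_derivative_mult
          has_vector_derivative_mult_right dw dA[OF x] dB[OF x])
    moreover have "p1 x * (q x * r x) + (- of_real w * p x) * A x - (q1 x * (p x * r x) + (- of_real w * q x) * B x)
         + \<alpha> * (- of_real w * p x) = - of_real w * v x + r x * (q x * p1 x - p x * q1 x)"
      unfolding v_def by (simp add: algebra_simps)
    ultimately show ?thesis using wr[of x] by simp
  qed
  have vc: "continuous_on {0..1} v" by (rule continuous_on_vector_derivative[OF dv])
  have v1c: "continuous_on {0..1} v1" by (rule continuous_on_vector_derivative[OF dv1])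
  define fc where "fc x = H2 x + v x" for x
  define f1c where "f1c x = H1 x + v1 x" for x
  define f2c where "f2c x = - \<i> * g x - of_real w * fc x" for x
  have f2c_eq: "f2c x = h x + (- of_real w * v x + r x)" for x
    by (simp add: f2c_def h_def fc_def r_def algebra_simps)
  have fcc: "continuous_on {0..1} fc" unfolding fc_def by (intro continuous_intros H2c vc)
  have f1cc: "continuous_on {0..1} f1c" unfolding f1c_def by (intro continuous_intros H1c v1c)
  have A0: "A 0 = 0" "B 0 = 0" "H1 0 = 0" "H2 0 = 0" by (simp_all add: A_def B_def H1_def H2_def)
  have fc0: "fc 0 = 0" by (simp add: fc_def v_def A0 init)
  have f1c0: "f1c 0 = v1 0" by (simp add: f1c_def A0)
  have f2int: "(f2c has_integral (H1 x + (v1 x - v1 0))) {0..x}" if x: "x \<in> {0..1}" for x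
  proof -
    have ih: "(h has_integral H1 x) {0..x}" unfolding H1_def by (rule integrable_integral[OF hint'[OF x]])
    have iv1: "((\<lambda>t. - of_real w * v t + r t) has_integral (v1 x - v1 0)) {0..x}"
    proof (rule fundamental_theorem_of_calculus)
      show "0 \<le> x" using x by auto
      show "(v1 has_vector_derivative - complex_of_real w * v t + r t) (at t within {0..x})" if "t \<in> {0..x}" for t
        by (rule has_vector_derivative_within_subset[OF dv1]) (use that x in auto)
    qed
    show ?thesis unfolding f2c_eq by (rule has_integral_add[OF ih iv1])
  qed
  have f1int: "(f1c has_integral (H2 x + (v x - v 0))) {0..x}" if x: "x \<in> {0..1}" for x
  proof -
    have iv: "(v1 has_integral (v x - v 0)) {0..x}"
    proof (rule fundamental_theorem_of_calculus)
      show "0 \<le> x" using x by auto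
      show "(v has_vector_derivative v1 t) (at t within {0..x})" if "t \<in> {0..x}" for t
        by (rule has_vector_derivative_within_subset[OF dv]) (use that x in auto)
    qed
    show ?thesis unfolding f1c_def by (rule has_integral_add[OF H1int[OF x] iv])
  qed
  have v0: "v 0 = 0" by (simp add: v_def A0 init)
  have bd: "f1c 1 = - \<i> * of_real k * fc 1"
  proof -
    have "f1c 1 + \<i> * of_real k * fc 1 = c0 + \<alpha> * D"
      by (simp add: f1c_def fc_def v_def v1_def c0_def D_def algebra_simps)
    also have "\<alpha> * D = - c0" using Dnz' by (simp add: \<alpha>_def)
    finally have "f1c 1 + \<i> * of_real k * fc 1 = 0" by simp
    then show ?thesis by (simp add: eq_neg_iff_add_eq_0 mult.assoc)
  qed
  define K where "K = (1 + 2 * M\<^sup>2 * \<bar>w\<bar>) * (1 + M * (1 + k) / norm D)"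
  have Dpos: "norm D > 0" using Dnz' by simp
  have I: "(1::real) \<in> {0..1}" by simp
  have pA: "norm (a * A y) \<le> M * (M * (\<bar>w\<bar> * N))" if "norm a \<le> M" "y \<in> {0..1}" for a y
    unfolding norm_mult by (rule mult_mono) (use that Ab M0 in auto)
  have pB: "norm (a * B y) \<le> M * (M * (\<bar>w\<bar> * N))" if "norm a \<le> M" "y \<in> {0..1}" for a y
    unfolding norm_mult by (rule mult_mono) (use that Bb M0 in auto)
  have c0b: "norm c0 \<le> (1 + k) * (1 + 2 * M\<^sup>2 * \<bar>w\<bar>) * N"
  proof -
    have t1: "norm c0 \<le> norm (H1 1) + norm (p1 1 * A 1) + norm (q1 1 * B 1)
        + norm (\<i> * of_real k * (H2 1 + p 1 * A 1 - q 1 * B 1))"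
      unfolding c0_def by (rule order_trans[OF norm_triangle_ineq], rule add_right_mono, rule n3)
    have t2: "norm (\<i> * of_real k * (H2 1 + p 1 * A 1 - q 1 * B 1))
       = k * norm (H2 1 + p 1 * A 1 - q 1 * B 1)"
      using kpos by (simp add: norm_mult)
    have t3: "k * norm (H2 1 + p 1 * A 1 - q 1 * B 1) \<le> k * (norm (H2 1) + norm (p 1 * A 1) + norm (q 1 * B 1))"
      by (rule mult_left_mono[OF n3]) (use kpos in simp)
    have "norm c0 \<le> norm (H1 1) + norm (p1 1 * A 1) + norm (q1 1 * B 1)
        + k * (norm (H2 1) + norm (p 1 * A 1) + norm (q 1 * B 1))"
      using t1 t2 t3 by linarith
    also have "\<dots> \<le> N + M * (M * (\<bar>w\<bar> * N)) + M * (M * (\<bar>w\<bar> * N))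
        + k * (N + M * (M * (\<bar>w\<bar> * N)) + M * (M * (\<bar>w\<bar> * N)))"
      using H1b[OF I] H2b[OF I] pA[OF conjunct1[OF M[OF I]] I] pB[OF conjunct2[OF conjunct2[OF conjunct2[OF M[OF I]]]] I]
        pB[OF conjunct1[OF conjunct2[OF conjunct2[OF M[OF I]]]] I] pA[OF conjunct1[OF conjunct2[OF M[OF I]]] I]
        kpos
      by (intro add_mono mult_left_mono) auto
    also have "\<dots> = (1 + k) * (1 + 2 * M\<^sup>2 * \<bar>w\<bar>) * N"
      by (simp add: power2_eq_square algebra_simps)
    finally show ?thesis .
  qed
  have \<alpha>b: "norm \<alpha> \<le> (1 + k) * (1 + 2 * M\<^sup>2 * \<bar>w\<bar>) * N / norm D"
    unfolding \<alpha>_def norm_divide norm_minus_cancel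
    by (rule divide_right_mono[OF c0b]) simp
  have nn: "0 \<le> (1 + k) * (1 + 2 * M\<^sup>2 * \<bar>w\<bar>) * N / norm D"
    by (intro divide_nonneg_nonneg mult_nonneg_nonneg) (use kpos N0 in auto)
  have fcb: "norm (fc x) \<le> K * N" if x: "x \<in> {0..1}" for x
  proof -
    note Mx = M[OF x]
    have "norm (fc x) \<le> norm (H2 x) + norm (p x * A x) + norm (q x * B x) + norm (\<alpha> * p x)"
      unfolding fc_def v_def by (rule n4)
    also have "\<dots> \<le> N + M * (M * (\<bar>w\<bar> * N)) + M * (M * (\<bar>w\<bar> * N))
        + (1 + k) * (1 + 2 * M\<^sup>2 * \<bar>w\<bar>) * N / norm D * M"
      unfolding norm_mult[of \<alpha>]
      using H2b[OF x] pA[OF conjunct1[OF Mx] x] pB[OF conjunct1[OF conjunct2[OF conjunct2[OF Mx]]] x]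
      by (intro add_mono mult_mono \<alpha>b) (use Mx M0 nn in auto)
    also have "\<dots> = K * N" unfolding K_def using Dpos
      by (simp add: field_simps power2_eq_square)
    finally show ?thesis .
  qed
  show ?thesis
  proof (intro exI conjI)
    show "continuous_on {0..1} fc" by (rule fcc)
    show "fc 0 = 0" by (rule fc0)
    show "f1c 1 = - \<i> * of_real k * fc 1" by (rule bd)
    show "\<forall>x\<in>{0..1}. norm (fc x) \<le> (1 + 2 * M\<^sup>2 * \<bar>w\<bar>) * (1 + M * (1 + k) / norm (p1 1 + \<i> * of_real k * p 1)) * L2_norm g"
      using fcb unfolding K_def D_def N_def by blast
    show "H2_with_derivs fc f1c (\<lambda>x. - \<i> * g x - of_real w * fc x)"
      unfolding H2_with_derivs_def f2c_def[symmetric]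
    proof (intro conjI ballI)
      have fb: "norm (- of_real w * fc x) \<le> \<bar>w\<bar> * (K * N)" if "x \<in> {0..1}" for x
        unfolding norm_mult by (simp add: mult_left_mono fcb[OF that])
      have "L2_01 (\<lambda>x. (- \<i>) * g x + (- of_real w * fc x))"
        by (rule L2_01_comb[OF g _ fb]) (intro continuous_intros fcc)
      then show "L2_01 f2c" by (simp add: f2c_def[abs_def])
      show "f2c integrable_on {0..1}" using f2int[OF I] by blast
      show "f1c integrable_on {0..1}" by (rule integrable_continuous_real[OF f1cc])
      show "f1c x = f1c 0 + integral {0..x} f2c" if "x \<in> {0..1}" for x
        using integral_unique[OF f2int[OF that]] f1c0 by (simp add: f1c_def)
      show "fc x = fc 0 + integral {0..x} f1c" if "x \<in> {0..1}" for x
        using integral_unique[OF f1int[OF that]] fc0 v0 by (simp add: fc_def)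
    qed
  qed
qed

end


context fund begin

lemma uniq:
  assumes H: "H2_with_derivs f f1 f2" "f 0 = 0" "f1 1 = - \<i> * of_real k * f 1"
  and Hc: "H2_with_derivs fc f1c f2c" "fc 0 = 0" "f1c 1 = - \<i> * of_real k * fc 1"
  and ae: "ae01 (\<lambda>x. f2 x - f2c x = - of_real w * (f x - fc x))"
  and x: "x \<in> {0..1}"
  shows "f x = fc x"
proof -
  define d where "d x = f x - fc x" for x
  define d1 where "d1 x = f1 x - f1c x" for x
  have f2i: "f2 integrable_on {0..1}" and f1i: "f1 integrable_on {0..1}"
    and f1e: "\<And>y. y \<in> {0..1} \<Longrightarrow> f1 y = f1 0 + integral {0..y} f2"
    and fe: "\<And>y. y \<in> {0..1} \<Longrightarrow> f y = f 0 + integral {0..y} f1"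
    using H(1) unfolding H2_with_derivs_def by blast+
  have f2ci: "f2c integrable_on {0..1}" and f1ci: "f1c integrable_on {0..1}"
    and f1ce: "\<And>y. y \<in> {0..1} \<Longrightarrow> f1c y = f1c 0 + integral {0..y} f2c"
    and fce: "\<And>y. y \<in> {0..1} \<Longrightarrow> fc y = fc 0 + integral {0..y} f1c"
    using Hc(1) unfolding H2_with_derivs_def by blast+
  have sub: "F integrable_on {0..y}" if "F integrable_on {0..1}" "y \<in> {0..1}"
    for F :: "real \<Rightarrow> complex" and y :: real
    using integrable_on_subinterval[OF that(1)] that(2) by auto
  have d_eq: "d y = integral {0..y} d1" if y: "y \<in> {0..1}" for y
  proof -
    have "d y = integral {0..y} f1 - integral {0..y} f1c"
      unfolding d_def using fe[OF y] fce[OF y] H(2) Hc(2) by simp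
    also have "\<dots> = integral {0..y} d1"
      unfolding d1_def by (rule integral_diff[symmetric, OF sub[OF f1i y] sub[OF f1ci y]])
    finally show ?thesis .
  qed
  have d1int: "d1 integrable_on {0..1}" unfolding d1_def by (rule integrable_diff[OF f1i f1ci])
  have dc: "continuous_on {0..1} d"
    by (rule continuous_on_eq[OF indefinite_integral_continuous_1[OF d1int]]) (use d_eq in auto)
  have wdc: "continuous_on {0..1} (\<lambda>t. - of_real w * d t)" by (intro continuous_intros dc)
  have d1_eq: "d1 y = d1 0 + integral {0..y} (\<lambda>t. - of_real w * d t)" if y: "y \<in> {0..1}" for y
  proof -
    have "d1 y = d1 0 + (integral {0..y} f2 - integral {0..y} f2c)"
      unfolding d1_def using f1e[OF y] f1ce[OF y] by simp
    also have "integral {0..y} f2 - integral {0..y} f2c = integral {0..y} (\<lambda>t. f2 t - f2c t)"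
      by (rule integral_diff[symmetric, OF sub[OF f2i y] sub[OF f2ci y]])
    also have "\<dots> = integral {0..y} (\<lambda>t. - of_real w * d t)"
    proof (rule integral_spike)
      show "negligible {x \<in> {0..1}. \<not> (f2 x - f2c x = - of_real w * (f x - fc x))}"
        using ae unfolding ae01_def .
      show "- of_real w * d t = f2 t - f2c t"
        if "t \<in> {0..y} - {x \<in> {0..1}. \<not> (f2 x - f2c x = - of_real w * (f x - fc x))}" for t
        using that y by (auto simp: d_def)
    qed
    finally show ?thesis .
  qed
  have dd1: "(d1 has_vector_derivative (- of_real w * d y)) (at y within {0..1})" if y: "y \<in> {0..1}" for y
  proof (rule has_vector_derivative_transform[OF y])
    show "d1 t = d1 0 + integral {0..t} (\<lambda>t. - of_real w * d t)" if "t \<in> {0..1}" for t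
      by (rule d1_eq[OF that])
    show "((\<lambda>t. d1 0 + integral {0..t} (\<lambda>t. - of_real w * d t)) has_vector_derivative (- of_real w * d y)) (at y within {0..1})"
    proof -
      have "((\<lambda>t. d1 0 + integral {0..t} (\<lambda>t. - of_real w * d t)) has_vector_derivative (0 + (- of_real w * d y))) (at y within {0..1})"
        by (intro has_vector_derivative_add has_vector_derivative_const integral_has_vector_derivative[OF wdc y])
      then show ?thesis by (simp only: add_0_left)
    qed
  qed
  have d1c: "continuous_on {0..1} d1" by (rule continuous_on_vector_derivative[OF dd1])
  have dd: "(d has_vector_derivative d1 y) (at y within {0..1})" if y: "y \<in> {0..1}" for y
  proof (rule has_vector_derivative_transform[OF y])
    show "d t = integral {0..t} d1" if "t \<in> {0..1}" for t by (rule d_eq[OF that])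
    show "((\<lambda>t. integral {0..t} d1) has_vector_derivative d1 y) (at y within {0..1})"
      by (rule integral_has_vector_derivative[OF d1c y])
  qed
  have d0: "d 0 = 0" using H(2) Hc(2) by (simp add: d_def)
  have W1: "d1 y * p y - d y * p1 y = 0" if y: "y \<in> {0..1}" for y
  proof -
    have "((\<lambda>t. d1 t * p t - d t * p1 t) has_vector_derivative 0) (at t within {0..1})" if t: "t \<in> {0..1}" for t
    proof -
      have "((\<lambda>t. d1 t * p t - d t * p1 t) has_vector_derivative
        (d1 t * p1 t + (- of_real w * d t) * p t - (d t * (- of_real w * p t) + d1 t * p1 t))) (at t within {0..1})"
        by (intro has_vector_derivative_diff has_vector_derivative_mult dd1[OF t] dd[OF t] dw)
      then show ?thesis by (simp add: algebra_simps)
    qed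
    then obtain c where c: "\<And>t. t \<in> {0..1} \<Longrightarrow> d1 t * p t - d t * p1 t = c"
      by (rule has_vector_derivative_zero_constant[OF convex_real_interval(5)]) auto
    have "c = 0" using c[of 0] d0 init by simp
    then show ?thesis using c[OF y] by simp
  qed
  have W2: "d1 y * q y - d y * q1 y = d1 0" if y: "y \<in> {0..1}" for y
  proof -
    have "((\<lambda>t. d1 t * q t - d t * q1 t) has_vector_derivative 0) (at t within {0..1})" if t: "t \<in> {0..1}" for t
    proof -
      have "((\<lambda>t. d1 t * q t - d t * q1 t) has_vector_derivative
        (d1 t * q1 t + (- of_real w * d t) * q t - (d t * (- of_real w * q t) + d1 t * q1 t))) (at t within {0..1})"
        by (intro has_vector_derivative_diff has_vector_derivative_mult dd1[OF t] dd[OF t] dw)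
      then show ?thesis by (simp add: algebra_simps)
    qed
    then obtain c where c: "\<And>t. t \<in> {0..1} \<Longrightarrow> d1 t * q t - d t * q1 t = c"
      by (rule has_vector_derivative_zero_constant[OF convex_real_interval(5)]) auto
    have "c = d1 0" using c[of 0] d0 init by simp
    then show ?thesis using c[OF y] by simp
  qed
  have drep: "d y = d1 0 * p y" "d1 y = d1 0 * p1 y" if y: "y \<in> {0..1}" for y
  proof -
    have "d y = d y * (q y * p1 y - p y * q1 y)" using wr[of y] by simp
    also have "\<dots> = p y * (d1 y * q y - d y * q1 y) - q y * (d1 y * p y - d y * p1 y)"
      by (simp add: algebra_simps)
    finally show "d y = d1 0 * p y" using W1[OF y] W2[OF y] by simp
    have "d1 y = d1 y * (q y * p1 y - p y * q1 y)" using wr[of y] by simp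
    also have "\<dots> = p1 y * (d1 y * q y - d y * q1 y) - q1 y * (d1 y * p y - d y * p1 y)"
      by (simp add: algebra_simps)
    finally show "d1 y = d1 0 * p1 y" using W1[OF y] W2[OF y] by simp
  qed
  have I: "(1::real) \<in> {0..1}" by simp
  have "d1 1 = - \<i> * of_real k * d 1" unfolding d1_def d_def using H(3) Hc(3) by (simp add: algebra_simps)
  then have "d1 0 * (p1 1 + \<i> * of_real k * p 1) = 0"
    using drep[OF I] by (simp add: algebra_simps)
  then have "d1 0 = 0" using Dnz by simp
  then have "d x = 0" using drep(1)[OF x] by simp
  then show ?thesis by (simp add: d_def)
qed

lemma resolvent: "\<i> * of_real w \<in> resolvent_set_A k"
proof -
  obtain B1 where B1: "\<forall>x\<in>{0..1}. norm (p x) \<le> B1" using cont_bound01[OF cont(1)] by blast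
  obtain B2 where B2: "\<forall>x\<in>{0..1}. norm (p1 x) \<le> B2" using cont_bound01[OF cont(2)] by blast
  obtain B3 where B3: "\<forall>x\<in>{0..1}. norm (q x) \<le> B3" using cont_bound01[OF cont(3)] by blast
  obtain B4 where B4: "\<forall>x\<in>{0..1}. norm (q1 x) \<le> B4" using cont_bound01[OF cont(4)] by blast
  define M where "M = \<bar>B1\<bar> + \<bar>B2\<bar> + \<bar>B3\<bar> + \<bar>B4\<bar>"
  have M: "norm (p x) \<le> M \<and> norm (p1 x) \<le> M \<and> norm (q x) \<le> M \<and> norm (q1 x) \<le> M" if "x \<in> {0..1}" for x
    using B1 B2 B3 B4 that unfolding M_def by fastforce
  have M0: "0 \<le> M" unfolding M_def by simp
  define K where "K = (1 + 2 * M\<^sup>2 * \<bar>w\<bar>) * (1 + M * (1 + k) / norm (p1 1 + \<i> * of_real k * p 1))"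
  have K0: "0 \<le> K" unfolding K_def using M0 kpos
    by (intro mult_nonneg_nonneg add_nonneg_nonneg divide_nonneg_nonneg) auto
  show ?thesis unfolding resolvent_set_A_def mem_Collect_eq
  proof (rule exI[of _ K], intro allI impI)
    fix g assume g: "L2_01 g"
    obtain fc f1c where fc: "continuous_on {0..1} fc"
      "H2_with_derivs fc f1c (\<lambda>x. - \<i> * g x - of_real w * fc x)" "fc 0 = 0"
      "f1c 1 = - \<i> * of_real k * fc 1" "\<forall>x\<in>{0..1}. norm (fc x) \<le> K * L2_norm g"
      using solve[OF g M] unfolding K_def by blast
    have N0: "0 \<le> L2_norm g" unfolding L2_norm_def using g unfolding L2_01_def
      by (simp add: integral_nonneg)
    have ae_triv: "ae01 (\<lambda>x. True)" unfolding ae01_def by simp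
    have ex: "\<exists>f u. A_graph k f u \<and> ae01 (\<lambda>x. \<i> * of_real w * f x - u x = g x)"
    proof (intro exI conjI)
      have fb: "norm (\<i> * of_real w * fc x) \<le> \<bar>w\<bar> * (K * L2_norm g)" if "x \<in> {0..1}" for x
        unfolding norm_mult using fc(5) that by (simp add: mult_left_mono)
      have "L2_01 (\<lambda>x. (-1) * g x + \<i> * of_real w * fc x)"
        by (rule L2_01_comb[OF g _ fb]) (intro continuous_intros fc(1))
      then have Lu: "L2_01 (\<lambda>x. \<i> * of_real w * fc x - g x)" by simp
      show "A_graph k fc (\<lambda>x. \<i> * of_real w * fc x - g x)"
        unfolding A_graph_def
      proof (intro exI conjI)
        show "H2_with_derivs fc f1c (\<lambda>x. - \<i> * g x - of_real w * fc x)" by (rule fc(2))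
        show "fc 0 = 0" by (rule fc(3))
        show "f1c 1 = - \<i> * of_real k * fc 1" by (rule fc(4))
        show "L2_01 (\<lambda>x. \<i> * of_real w * fc x - g x)" by (rule Lu)
        show "ae01 (\<lambda>x. \<i> * of_real w * fc x - g x = - \<i> * (- \<i> * g x - of_real w * fc x))"
          using ae_triv by (simp add: algebra_simps)
      qed
      show "ae01 (\<lambda>x. \<i> * of_real w * fc x - (\<i> * of_real w * fc x - g x) = g x)"
        using ae_triv by simp
    qed
    have bd: "\<forall>f u. A_graph k f u \<and> ae01 (\<lambda>x. \<i> * of_real w * f x - u x = g x) \<longrightarrow> L2_norm f \<le> K * L2_norm g"
    proof (intro allI impI)
    fix f u assume fu: "A_graph k f u \<and> ae01 (\<lambda>x. \<i> * of_real w * f x - u x = g x)"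
    then obtain f1 f2 where ff: "H2_with_derivs f f1 f2" "f 0 = 0" "f1 1 = - \<i> * of_real k * f 1"
      "ae01 (\<lambda>x. u x = - \<i> * f2 x)" unfolding A_graph_def by blast
    have ae: "ae01 (\<lambda>x. f2 x - (- \<i> * g x - of_real w * fc x) = - of_real w * (f x - fc x))"
    proof -
      have "negligible ({x \<in> {0..1}. \<not> u x = - \<i> * f2 x} \<union> {x \<in> {0..1}. \<not> \<i> * of_real w * f x - u x = g x})"
        using ff(4) fu unfolding ae01_def by (intro negligible_Un) auto
      moreover have "{x \<in> {0..1}. \<not> f2 x - (- \<i> * g x - of_real w * fc x) = - of_real w * (f x - fc x)}
         \<subseteq> {x \<in> {0..1}. \<not> u x = - \<i> * f2 x} \<union> {x \<in> {0..1}. \<not> \<i> * of_real w * f x - u x = g x}"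
      proof (rule subsetI, rule ccontr)
        fix x assume a: "x \<in> {x \<in> {0..1}. \<not> f2 x - (- \<i> * g x - of_real w * fc x) = - of_real w * (f x - fc x)}"
          and b: "x \<notin> {x \<in> {0..1}. \<not> u x = - \<i> * f2 x} \<union> {x \<in> {0..1}. \<not> \<i> * of_real w * f x - u x = g x}"
        from a b have u1: "u x = - \<i> * f2 x" and u2: "\<i> * of_real w * f x - u x = g x" by auto
        have "f2 x = \<i> * u x" using u1 by simp
        also have "\<dots> = \<i> * (\<i> * of_real w * f x - g x)" using u2 by (simp add: algebra_simps)
        finally have e: "f2 x = - of_real w * f x - \<i> * g x" by (simp add: algebra_simps)
        have "f2 x - (- \<i> * g x - of_real w * fc x) = - of_real w * (f x - fc x)"
          unfolding e by (simp add: algebra_simps)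
        then show False using a by blast
      qed
      ultimately show ?thesis unfolding ae01_def by (rule negligible_subset)
    qed
    have eq: "f x = fc x" if "x \<in> {0..1}" for x
      by (rule uniq[OF ff(1-3) fc(2-4) ae that])
    have "L2_norm f = L2_norm fc" unfolding L2_norm_def
      by (rule arg_cong[where f=sqrt], rule integral_cong) (simp add: eq)
    also have "\<dots> \<le> K * L2_norm g"
      by (rule L2_norm_bound[OF fc(1)]) (use fc(5) K0 N0 in auto)
    finally show "L2_norm f \<le> K * L2_norm g" .
    qed
    show "(\<exists>f u. A_graph k f u \<and> ae01 (\<lambda>x. \<i> * of_real w * f x - u x = g x)) \<and>
      (\<forall>f u. A_graph k f u \<and> ae01 (\<lambda>x. \<i> * of_real w * f x - u x = g x) \<longrightarrow> L2_norm f \<le> K * L2_norm g)"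
      using ex bd by blast
  qed
qed

end


lemma vd_real: "(f has_real_derivative D) (at x) \<Longrightarrow> E = complex_of_real D \<Longrightarrow>
  ((\<lambda>x. complex_of_real (f x)) has_vector_derivative E) (at x)"
  using has_vector_derivative_of_real by blast

lemma case_pos:
  assumes w: "w > 0" and k: "k > 0"
  shows "\<i> * complex_of_real w \<in> resolvent_set_A k"
proof -
  define l where "l = sqrt w"
  have l: "l > 0" "l * l = w" using w by (auto simp: l_def)
  interpret fund w k "\<lambda>x. of_real (sin (l*x)/l)" "\<lambda>x. of_real (cos (l*x))"
    "\<lambda>x. of_real (cos (l*x))" "\<lambda>x. of_real (-(l * sin (l*x)))"
  proof unfold_locales
    show "k > 0" by (rule k)
    fix x :: real
    have d1: "((\<lambda>x. sin (l*x)/l) has_real_derivative cos (l*x)) (at x)"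
      using l by (auto intro!: derivative_eq_intros)
    have d2: "((\<lambda>x. cos (l*x)) has_real_derivative -(l * sin (l*x))) (at x)"
      by (auto intro!: derivative_eq_intros)
    have d3: "((\<lambda>x. -(l * sin (l*x))) has_real_derivative -(l * l * cos (l*x))) (at x)"
      by (auto intro!: derivative_eq_intros)
    show "((\<lambda>x. complex_of_real (sin (l * x) / l)) has_vector_derivative complex_of_real (cos (l * x))) (at x)"
      by (rule vd_real[OF d1]) simp
    show "((\<lambda>x. complex_of_real (cos (l * x))) has_vector_derivative
          - complex_of_real w * complex_of_real (sin (l * x) / l)) (at x)"
      by (rule vd_real[OF d2]) (use l in \<open>auto simp: field_simps simp flip: l(2)\<close>)
    show "((\<lambda>x. complex_of_real (cos (l * x))) has_vector_derivative complex_of_real (- (l * sin (l * x)))) (at x)"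
      by (rule vd_real[OF d2]) simp
    show "((\<lambda>x. complex_of_real (- (l * sin (l * x)))) has_vector_derivative
          - complex_of_real w * complex_of_real (cos (l * x))) (at x)"
      by (rule vd_real[OF d3]) (simp flip: l(2))
  qed auto
  show ?thesis by (rule resolvent)
qed

lemma case_neg:
  assumes w: "w < 0" and k: "k > 0"
  shows "\<i> * complex_of_real w \<in> resolvent_set_A k"
proof -
  define l where "l = sqrt (-w)"
  have l: "l > 0" "l * l = -w" using w by (auto simp: l_def)
  have wl: "w = -(l*l)" using l by simp
  interpret fund w k "\<lambda>x. of_real (sinh (l*x)/l)" "\<lambda>x. of_real (cosh (l*x))"
    "\<lambda>x. of_real (cosh (l*x))" "\<lambda>x. of_real (l * sinh (l*x))"
  proof unfold_locales
    show "k > 0" by (rule k)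
    fix x :: real
    have lin: "((\<lambda>x. l*x) has_real_derivative l) (at x)" by (auto intro!: derivative_eq_intros)
    have s: "((\<lambda>x. sinh (l*x)) has_real_derivative cosh (l*x) * l) (at x)"
      by (rule has_field_derivative_sinh[OF lin])
    have c: "((\<lambda>x. cosh (l*x)) has_real_derivative sinh (l*x) * l) (at x)"
      by (rule has_field_derivative_cosh[OF lin])
    have d1: "((\<lambda>x. sinh (l*x)/l) has_real_derivative cosh (l*x)) (at x)"
      using DERIV_cdivide[OF s, of l] l by simp
    have d3: "((\<lambda>x. l * sinh (l*x)) has_real_derivative l * (cosh (l*x) * l)) (at x)"
      by (rule DERIV_cmult[OF s])
    show "((\<lambda>x. complex_of_real (sinh (l * x) / l)) has_vector_derivative complex_of_real (cosh (l * x))) (at x)"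
      by (rule vd_real[OF d1]) simp
    show "((\<lambda>x. complex_of_real (cosh (l * x))) has_vector_derivative
          - complex_of_real w * complex_of_real (sinh (l * x) / l)) (at x)"
      by (rule vd_real[OF c]) (use l(1) in \<open>simp add: wl field_simps\<close>)
    show "((\<lambda>x. complex_of_real (cosh (l * x))) has_vector_derivative complex_of_real (l * sinh (l * x))) (at x)"
      by (rule vd_real[OF c]) simp
    show "((\<lambda>x. complex_of_real (l * sinh (l * x))) has_vector_derivative
          - complex_of_real w * complex_of_real (cosh (l * x))) (at x)"
      by (rule vd_real[OF d3]) (use l(1) in \<open>simp add: wl field_simps\<close>)
  qed auto
  show ?thesis by (rule resolvent)
qed

lemma case_zero:
  assumes w: "w = 0" and k: "k > 0"
  shows "\<i> * complex_of_real w \<in> resolvent_set_A k"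
proof -
  interpret fund w k "\<lambda>x. of_real x" "\<lambda>x. 1" "\<lambda>x. 1" "\<lambda>x. 0"
  proof unfold_locales
    show "k > 0" by (rule k)
    fix x :: real
    show "((\<lambda>x. complex_of_real x) has_vector_derivative 1) (at x)"
      by (rule vd_real[where D=1]) (auto intro!: derivative_eq_intros)
    show "((\<lambda>x. 1) has_vector_derivative - complex_of_real w * complex_of_real x) (at x)"
      using w by (simp add: has_vector_derivative_const)
    show "((\<lambda>x. 1) has_vector_derivative 0) (at x)" by (simp add: has_vector_derivative_const)
    show "((\<lambda>x. 0) has_vector_derivative - complex_of_real w * 1) (at x)"
      using w by (simp add: has_vector_derivative_const)
  qed auto
  show ?thesis by (rule resolvent)
qed

theorem lemma1:
  fixes k :: real
  assumes "k > 0"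
  shows "\<forall>\<omega>::real. \<i> * complex_of_real \<omega> \<in> resolvent_set_A k"
proof
  fix \<omega> :: real
  show "\<i> * complex_of_real \<omega> \<in> resolvent_set_A k"
    using case_pos[OF _ assms] case_neg[OF _ assms] case_zero[OF _ assms]
    by (cases "\<omega> > 0"; cases "\<omega> < 0") auto
qed

end
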